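(* Let $p$ be a prime with $p\equiv5\pmod6$. Then $D^{p-1}(\mathbf{u})=H^2(\mathbf{u})$ for every $\mathbf{u}\in\mathbb{Z}_p^3$, i.e. $D^{p-1}(x_1,x_2,x_3)=(x_3,x_1,x_2)$.
   Context: The Ducci function $D:\mathbb{Z}_p^3\to\mathbb{Z}_p^3$ is $D(x_1,x_2,x_3)=(x_1+x_2,\,x_2+x_3,\,x_3+x_1)$, entries mod $p$. $H(x_1,x_2,x_3)=(x_2,x_3,x_1)$. *)

theory Defs
  imports "HOL-Computational_Algebra.Primes"
begin

text \<open>Elements of Z_p are represented by natural numbers in {0..<p}; triples in Z_p^3
  are triples of such numbers.\<close>

definition ducci :: "nat \<Rightarrow> nat \<times> nat \<times> nat \<Rightarrow> nat \<times> nat \<times> nat" where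
  "ducci p u = (case u of (x1, x2, x3) \<Rightarrow> ((x1 + x2) mod p, (x2 + x3) mod p, (x3 + x1) mod p))"

definition shiftH :: "nat \<times> nat \<times> nat \<Rightarrow> nat \<times> nat \<times> nat" where
  "shiftH u = (case u of (x1, x2, x3) \<Rightarrow> (x2, x3, x1))"

definition Zp3 :: "nat \<Rightarrow> (nat \<times> nat \<times> nat) set" where
  "Zp3 p = {(x1, x2, x3). x1 < p \<and> x2 < p \<and> x3 < p}"

end

theory Submission
  imports Defs
begin

definition cmp :: "nat \<times> nat \<times> nat \<Rightarrow> nat \<Rightarrow> nat" where
  "cmp u j = (if j mod 3 = 0 then fst u else if j mod 3 = 1 then fst (snd u) else snd (snd u))"

lemma comp_ducci: "cmp (ducci p v) j = (cmp v j + cmp v (Suc j)) mod p"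
proof -
  obtain a b c where v: "v = (a,b,c)" by (cases v) auto
  have "j mod 3 = 0 \<or> j mod 3 = 1 \<or> j mod 3 = 2" by auto
  then show ?thesis
    by (auto simp: v cmp_def ducci_def mod_Suc add.commute)
qed

lemma comp_H2: "cmp ((shiftH ^^ 2) u) j = cmp u (j + 2)"
proof -
  obtain a b c where v: "u = (a,b,c)" by (cases u) auto
  have "j mod 3 = 0 \<or> j mod 3 = 1 \<or> j mod 3 = 2" by auto
  then show ?thesis
    by (auto simp: v cmp_def shiftH_def numeral_2_eq_2 mod_Suc)
qed

lemma comp_eq: assumes "\<And>j. cmp a j = cmp b j" shows "a = b"
proof -
  have "cmp a 0 = cmp b 0" "cmp a 1 = cmp b 1" "cmp a 2 = cmp b 2" using assms by auto
  then show ?thesis by (auto simp: cmp_def prod_eq_iff)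
qed

lemma comp_lt: "u \<in> Zp3 p \<Longrightarrow> cmp u j < p"
  by (auto simp: Zp3_def cmp_def)

lemma pascal_sum:
  fixes f :: "nat \<Rightarrow> nat"
  shows "(\<Sum>k\<le>Suc n. (Suc n choose k) * f k) =
    (\<Sum>k\<le>n. (n choose k) * f k) + (\<Sum>k\<le>n. (n choose k) * f (Suc k))"
proof -
  have "(\<Sum>k\<le>Suc n. (Suc n choose k) * f k) = f 0 + (\<Sum>k\<le>n. (Suc n choose Suc k) * f (Suc k))"
    by (simp only: sum.atMost_Suc_shift) simp
  also have "\<dots> = f 0 + (\<Sum>k\<le>n. (n choose Suc k) * f (Suc k)) + (\<Sum>k\<le>n. (n choose k) * f (Suc k))"
    by (simp add: sum.distrib algebra_simps)
  also have "(\<Sum>k\<le>n. (n choose k) * f k) = f 0 + (\<Sum>k<n. (n choose Suc k) * f (Suc k))"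
  proof (cases n)
    case 0
    then show ?thesis by simp
  next
    case (Suc n')
    then show ?thesis by (simp only: sum.atMost_Suc_shift lessThan_Suc_atMost) simp
  qed
  moreover have "(\<Sum>k\<le>n. (n choose Suc k) * f (Suc k)) = (\<Sum>k<n. (n choose Suc k) * f (Suc k))"
    by (simp add: lessThan_Suc_atMost[symmetric])
  ultimately show ?thesis by simp
qed

lemma iter_formula:
  assumes "u \<in> Zp3 p"
  shows "cmp ((ducci p ^^ n) u) j = (\<Sum>k\<le>n. (n choose k) * cmp u (j + k)) mod p"
  using assms
proof (induction n arbitrary: j)
  case 0
  then show ?case using comp_lt[OF 0] by simp
next
  case (Suc n)
  have "cmp ((ducci p ^^ Suc n) u) j =
    ((\<Sum>k\<le>n. (n choose k) * cmp u (j + k)) mod p + (\<Sum>k\<le>n. (n choose k) * cmp u (Suc j + k)) mod p) mod p"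
    using Suc by (simp add: comp_ducci)
  also have "\<dots> = ((\<Sum>k\<le>n. (n choose k) * cmp u (j + k)) + (\<Sum>k\<le>n. (n choose k) * cmp u (j + Suc k))) mod p"
    by (simp add: mod_add_eq)
  also have "\<dots> = (\<Sum>k\<le>Suc n. (Suc n choose k) * cmp u (j + k)) mod p"
    using pascal_sum[of n "\<lambda>k. cmp u (j + k)"] by simp
  finally show ?case .
qed

lemma binom_alt:
  assumes p: "prime p" and "k \<le> p - 1"
  shows "int (p - 1 choose k) mod int p = (-1) ^ k mod int p"
  using assms(2)
proof (induction k)
  case 0
  then show ?case by simp
next
  case (Suc k)
  have p1: "p = Suc (p - 1)" using prime_gt_0_nat[OF p] by simp
  have e: "(p choose Suc k) = (p - 1 choose k) + (p - 1 choose Suc k)"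
    by (subst p1) simp
  have "p dvd (p choose Suc k)"
    using Suc.prems p by (intro dvd_choose_prime) auto
  then have "int p dvd int (p choose Suc k)" by (simp only: int_dvd_int_iff)
  then obtain q where q: "int (p - 1 choose k) + int (p - 1 choose Suc k) = int p * q"
    using e by (auto simp: dvd_def)
  then have h: "int (p - 1 choose Suc k) = - int (p - 1 choose k) + int p * q" by linarith
  have "int (p - 1 choose Suc k) mod int p = (- int (p - 1 choose k)) mod int p"
    by (simp only: h mod_mult_self2)
  also have "\<dots> = (- ((-1) ^ k)) mod int p"
    using Suc by (intro mod_minus_cong) simp
  finally show ?case by simp
qed

lemma alt_period:
  fixes g :: "nat \<Rightarrow> int"
  assumes "\<And>k. g (k + 6) = g k" and "g 0 + g 1 + g 2 + g 3 + g 4 + g 5 = 0"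
  shows "(\<Sum>k<6*m. g k) = 0 \<and> (\<forall>r. g (6*m + r) = g r)"
proof (induction m)
  case 0
  then show ?case by simp
next
  case (Suc m)
  have e: "6 * Suc m = Suc (Suc (Suc (Suc (Suc (Suc (6*m))))))" by simp
  have gr: "\<forall>r. g (6 * Suc m + r) = g r"
  proof
    fix r
    have "g (6 * Suc m + r) = g ((6*m+r)+6)" by (rule arg_cong[where f=g]) simp
    also have "\<dots> = g (6*m+r)" by (rule assms(1))
    also have "\<dots> = g r" using Suc.IH by blast
    finally show "g (6 * Suc m + r) = g r" .
  qed
  have "(\<Sum>k<6*Suc m. g k) = (\<Sum>k<6*m. g k) + g (6*m+0) + g (6*m+1) + g (6*m+2) + g (6*m+3) + g (6*m+4) + g (6*m+5)"
    by (simp only: e sum.lessThan_Suc) (simp add: numeral_eq_Suc)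
  also have "\<dots> = (\<Sum>k<6*m. g k) + g 0 + g 1 + g 2 + g 3 + g 4 + g 5"
    using Suc.IH by (simp only:)
  also have "\<dots> = 0" using Suc.IH assms(2) by simp
  finally show ?case using gr by simp
qed

lemma alt_sum:
  fixes c :: "nat \<Rightarrow> int"
  assumes c3: "\<And>k. c (k + 3) = c k"
  shows "(\<Sum>k<6*m+5. (-1)^k * c k) = c 2"
proof -
  define g where "g k = (-1::int)^k * c k" for k
  have c6: "c (k + 6) = c k" for k using c3[of "k+3"] c3[of k] by (simp add: add.assoc)
  have "g (k + 6) = g k" for k by (simp add: g_def c6 power_add)
  moreover have "g 0 + g 1 + g 2 + g 3 + g 4 + g 5 = 0"
    using c3[of 0] c3[of 1] c3[of 2] by (simp add: g_def)
  ultimately have A: "(\<Sum>k<6*m. g k) = 0 \<and> (\<forall>r. g (6*m + r) = g r)"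
    by (rule alt_period)
  have e: "6*m+5 = Suc (Suc (Suc (Suc (Suc (6*m)))))" by simp
  have "(\<Sum>k<6*m+5. g k) = (\<Sum>k<6*m. g k) + g (6*m+0) + g (6*m+1) + g (6*m+2) + g (6*m+3) + g (6*m+4)"
    by (simp only: e sum.lessThan_Suc) (simp add: numeral_eq_Suc)
  also have "\<dots> = (\<Sum>k<6*m. g k) + g 0 + g 1 + g 2 + g 3 + g 4"
    using A by (simp only:)
  also have "\<dots> = g 0 + g 1 + g 2 + g 3 + g 4" using A by simp
  also have "\<dots> = c 2" using c3[of 0] c3[of 1] by (simp add: g_def)
  finally show ?thesis by (simp add: g_def)
qed

theorem lemma4p3:
  fixes p :: nat
  assumes "prime p" and "p mod 6 = 5"
  shows "\<forall>u \<in> Zp3 p. (ducci p ^^ (p - 1)) u = (shiftH ^^ 2) u"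
proof
  fix u assume u: "u \<in> Zp3 p"
  define m where "m = p div 6"
  have pm: "p = 6*m+5" using mod_mult_div_eq[of p 6] assms(2) unfolding m_def by linarith
  have pm1: "p - 1 = 6*m+4" using pm by simp
  show "(ducci p ^^ (p - 1)) u = (shiftH ^^ 2) u"
  proof (rule comp_eq)
    fix j
    define c where "c k = int (cmp u (j + k))" for k
    have c3: "c (k + 3) = c k" for k by (simp add: c_def cmp_def add.assoc[symmetric])
    have "int (cmp ((ducci p ^^ (p - 1)) u) j) =
      (\<Sum>k\<le>p-1. int (p - 1 choose k) * c k) mod int p"
      by (simp add: iter_formula[OF u] c_def zmod_int)
    also have "\<dots> = (\<Sum>k\<le>p-1. (int (p - 1 choose k) * c k) mod int p) mod int p"
      by (simp add: mod_sum_eq)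
    also have "\<dots> = (\<Sum>k\<le>p-1. ((-1)^k * c k) mod int p) mod int p"
      by (intro arg_cong[where f="\<lambda>x. x mod int p"] sum.cong refl mod_mult_cong binom_alt[OF assms(1)]) auto
    also have "\<dots> = (\<Sum>k\<le>p-1. (-1)^k * c k) mod int p"
      by (simp add: mod_sum_eq)
    also have "(\<Sum>k\<le>p-1. (-1)^k * c k) = (\<Sum>k<6*m+5. (-1)^k * c k)"
    proof -
      have "{..p-1} = {..<6*m+5}" using pm1 by auto
      then show ?thesis by (simp only:)
    qed
    also have "\<dots> = c 2" using alt_sum c3 by blast
    also have "c 2 mod int p = c 2"
      using comp_lt[OF u, of "j+2"] by (simp add: c_def)
    finally show "cmp ((ducci p ^^ (p - 1)) u) j = cmp ((shiftH ^^ 2) u) j"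
      by (simp add: comp_H2 c_def)
  qed
qed

end
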